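(* Let $v$ be a typical weight and let $X$ be an initial space such that for every $f\in X$ and $0\le r<1$ the function $f_r(z)=f(rz)$ belongs to $X$, and $\sup_{0\le r<1}\|f_r\|_X\le C\|f\|_X$ for a constant $C$ independent of $f$. Let $T$ be an intrinsic operator on $\mathcal{H}(\mathbb{D})$ such that $Tf_r\in H_{v,0}$ for all $f\in X$ and all $0\le r<1$. If $T:X\to H_v$ is weakly compact, then $T:X\to H_{v,0}$ is bounded.
   Context: $\mathcal{H}(\mathbb{D})$ is the space of holomorphic functions on the unit disk $\mathbb{D}$ with the topology $\tau_{uc}$ of uniform convergence on compact subsets. A linear operator $T$ on $\mathcal{H}(\mathbb{D})$ is intrinsic if it maps $\tau_{uc}$-convergent sequences to $\tau_{uc}$-convergent sequences. An initial space is a Banach space $X\subset\mathcal{H}(\mathbb{D})$ containing the polynomials such that every sequence in the closed unit ball of $X$ has a subsequence converging in $\tau_{uc}$ to some function in $X$. A typical weight is a continuous radial $v:\mathbb{D}\to(0,1]$, non-increasing in $|z|$, with $v(z)\to0$ as $|z|\to1$. $H_v=\{f\in\mathcal{H}(\mathbb{D}):\sup_z v(z)|f(z)|<\infty\}$ with that supremum as norm, and $H_{v,0}=\{f:\lim_{|z|\to1}v(z)|f(z)|=0\}$. *)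

theory Defs
  imports "HOL-Analysis.Analysis"
begin

text \<open>Elements of H(D) are represented canonically as functions complex => complex
  that are holomorphic on the open unit disc and vanish outside it.\<close>

definition Hol :: "(complex \<Rightarrow> complex) set" where
  "Hol = {f. f holomorphic_on ball 0 1 \<and> (\<forall>z. z \<notin> ball 0 1 \<longrightarrow> f z = 0)}"

definition uc_conv :: "(nat \<Rightarrow> complex \<Rightarrow> complex) \<Rightarrow> (complex \<Rightarrow> complex) \<Rightarrow> bool" where
  "uc_conv fs f \<longleftrightarrow> (\<forall>K. compact K \<and> K \<subseteq> ball 0 1 \<longrightarrow> uniform_limit K fs f sequentially)"

definition lin_op_Hol :: "((complex \<Rightarrow> complex) \<Rightarrow> (complex \<Rightarrow> complex)) \<Rightarrow> bool" where
  "lin_op_Hol T \<longleftrightarrow> (\<forall>f\<in>Hol. T f \<in> Hol) \<and>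
     (\<forall>f\<in>Hol. \<forall>g\<in>Hol. \<forall>a b. T (\<lambda>z. a * f z + b * g z) = (\<lambda>z. a * T f z + b * T g z))"

definition intrinsic :: "((complex \<Rightarrow> complex) \<Rightarrow> (complex \<Rightarrow> complex)) \<Rightarrow> bool" where
  "intrinsic T \<longleftrightarrow> lin_op_Hol T \<and>
     (\<forall>fs f. (\<forall>n. fs n \<in> Hol) \<and> f \<in> Hol \<and> uc_conv fs f \<longrightarrow>
        (\<exists>g\<in>Hol. uc_conv (\<lambda>n. T (fs n)) g))"

definition banach_subspace :: "(complex \<Rightarrow> complex) set \<Rightarrow> ((complex \<Rightarrow> complex) \<Rightarrow> real) \<Rightarrow> bool" where
  "banach_subspace X N \<longleftrightarrow> X \<subseteq> Hol \<and> (\<lambda>z. 0) \<in> X \<and>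
     (\<forall>f\<in>X. \<forall>g\<in>X. \<forall>a b. (\<lambda>z. a * f z + b * g z) \<in> X) \<and>
     (\<forall>f\<in>X. N f \<ge> 0 \<and> (N f = 0 \<longleftrightarrow> f = (\<lambda>z. 0))) \<and>
     (\<forall>f\<in>X. \<forall>a. N (\<lambda>z. a * f z) = norm a * N f) \<and>
     (\<forall>f\<in>X. \<forall>g\<in>X. N (\<lambda>z. f z + g z) \<le> N f + N g) \<and>
     (\<forall>fs. (\<forall>n. fs n \<in> X) \<and> (\<forall>e>0. \<exists>M. \<forall>m\<ge>M. \<forall>n\<ge>M. N (\<lambda>z. fs m z - fs n z) < e) \<longrightarrow>
        (\<exists>f\<in>X. (\<lambda>n. N (\<lambda>z. fs n z - f z)) \<longlonglongrightarrow> 0))"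

definition poly_Hol :: "(complex \<Rightarrow> complex) set" where
  "poly_Hol = {p. \<exists>c :: nat \<Rightarrow> complex. \<exists>n.
      p = (\<lambda>z. if z \<in> ball 0 1 then (\<Sum>k\<le>n. c k * z ^ k) else 0)}"

definition initial_space :: "(complex \<Rightarrow> complex) set \<Rightarrow> ((complex \<Rightarrow> complex) \<Rightarrow> real) \<Rightarrow> bool" where
  "initial_space X N \<longleftrightarrow> banach_subspace X N \<and> poly_Hol \<subseteq> X \<and>
     (\<forall>fs. (\<forall>n. fs n \<in> X \<and> N (fs n) \<le> 1) \<longrightarrow>
        (\<exists>(r :: nat \<Rightarrow> nat) f. strict_mono r \<and> f \<in> X \<and> uc_conv (fs \<circ> r) f))"

definition typical_weight :: "(complex \<Rightarrow> real) \<Rightarrow> bool" where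
  "typical_weight v \<longleftrightarrow> continuous_on (ball 0 1) v \<and>
     (\<forall>z\<in>ball 0 1. 0 < v z \<and> v z \<le> 1) \<and>
     (\<forall>z\<in>ball 0 1. \<forall>w\<in>ball 0 1. norm z = norm w \<longrightarrow> v z = v w) \<and>
     (\<forall>z\<in>ball 0 1. \<forall>w\<in>ball 0 1. norm z \<le> norm w \<longrightarrow> v w \<le> v z) \<and>
     (\<forall>e>0. \<exists>d<1. \<forall>z\<in>ball 0 1. d < norm z \<longrightarrow> v z < e)"

definition Hv :: "(complex \<Rightarrow> real) \<Rightarrow> (complex \<Rightarrow> complex) set" where
  "Hv v = {f\<in>Hol. bdd_above ((\<lambda>z. v z * norm (f z)) ` ball 0 1)}"

definition Hv_norm :: "(complex \<Rightarrow> real) \<Rightarrow> (complex \<Rightarrow> complex) \<Rightarrow> real" where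
  "Hv_norm v f = (SUP z\<in>ball 0 1. v z * norm (f z))"

definition Hv0 :: "(complex \<Rightarrow> real) \<Rightarrow> (complex \<Rightarrow> complex) set" where
  "Hv0 v = {f\<in>Hol. \<forall>e>0. \<exists>d<1. \<forall>z\<in>ball 0 1. d < norm z \<longrightarrow> v z * norm (f z) < e}"

definition Hv_dual :: "(complex \<Rightarrow> real) \<Rightarrow> ((complex \<Rightarrow> complex) \<Rightarrow> complex) set" where
  "Hv_dual v = {\<phi>. (\<forall>f\<in>Hv v. \<forall>g\<in>Hv v. \<forall>a b. \<phi> (\<lambda>z. a * f z + b * g z) = a * \<phi> f + b * \<phi> g) \<and>
      (\<exists>c. \<forall>f\<in>Hv v. norm (\<phi> f) \<le> c * Hv_norm v f)}"

definition Hv_weak :: "(complex \<Rightarrow> real) \<Rightarrow> (complex \<Rightarrow> complex) topology" where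
  "Hv_weak v = topology_generated_by
     {{f\<in>Hv v. \<phi> f \<in> U} | \<phi> U. \<phi> \<in> Hv_dual v \<and> open U}"

definition weakly_compact_into_Hv ::
  "((complex \<Rightarrow> complex) \<Rightarrow> (complex \<Rightarrow> complex)) \<Rightarrow> (complex \<Rightarrow> complex) set \<Rightarrow>
   ((complex \<Rightarrow> complex) \<Rightarrow> real) \<Rightarrow> (complex \<Rightarrow> real) \<Rightarrow> bool" where
  "weakly_compact_into_Hv T X N v \<longleftrightarrow> T ` X \<subseteq> Hv v \<and>
     compactin (Hv_weak v) ((Hv_weak v) closure_of (T ` {f\<in>X. N f \<le> 1}))"

definition dilate :: "real \<Rightarrow> (complex \<Rightarrow> complex) \<Rightarrow> (complex \<Rightarrow> complex)" where
  "dilate r f = (\<lambda>z. if z \<in> ball 0 1 then f (of_real r * z) else 0)"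

end

theory Submission
  imports Defs
begin

lemma Hv_weak_topspace: "topspace (Hv_weak v) = Hv v"
proof -
  have "(\<lambda>_. 0) \<in> Hv_dual v" unfolding Hv_dual_def by (auto intro: exI[of _ 0] simp: Hv_norm_def)
  hence "{f\<in>Hv v. (\<lambda>_. 0::complex) f \<in> UNIV} \<in> {{f\<in>Hv v. \<phi> f \<in> U} | \<phi> U. \<phi> \<in> Hv_dual v \<and> open U}"
    by blast
  thus ?thesis unfolding Hv_weak_def by auto
qed

lemma Hv_dual_cont:
  assumes "\<phi> \<in> Hv_dual v" shows "continuous_map (Hv_weak v) euclidean \<phi>"
  unfolding continuous_map Hv_weak_topspace
proof (intro conjI allI impI)
  fix U :: "complex set" assume "openin euclidean U"
  hence "open U" by simp
  hence "{f\<in>Hv v. \<phi> f \<in> U} \<in> {{f\<in>Hv v. \<phi> f \<in> U} | \<phi> U. \<phi> \<in> Hv_dual v \<and> open U}"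
    using assms by blast
  thus "openin (Hv_weak v) {x \<in> Hv v. \<phi> x \<in> U}" unfolding Hv_weak_def
    by (rule topology_generated_by_Basis)
qed auto

lemma compact_cluster:
  assumes "compactin W K" "\<And>n. h n \<in> K"
  shows "\<exists>x\<in>K. \<forall>V. openin W V \<and> x \<in> V \<longrightarrow> frequently (\<lambda>n. h n \<in> V) sequentially"
proof (rule ccontr)
  assume "\<not> ?thesis"
  hence "\<forall>x\<in>K. \<exists>V. openin W V \<and> x \<in> V \<and> eventually (\<lambda>n. h n \<notin> V) sequentially"
    by (auto simp: not_frequently)
  then obtain Oo where O: "\<And>x. x\<in>K \<Longrightarrow> openin W (Oo x) \<and> x \<in> Oo x \<and> eventually (\<lambda>n. h n \<notin> Oo x) sequentially"
    by metis
  have "\<forall>U\<in>Oo ` K. openin W U" "K \<subseteq> \<Union>(Oo ` K)" using O by auto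
  then obtain F where F: "finite F" "F \<subseteq> Oo ` K" "K \<subseteq> \<Union>F"
    using assms(1) unfolding compactin_def by meson
  have "\<forall>U\<in>F. eventually (\<lambda>n. h n \<notin> U) sequentially" using F(2) O by blast
  hence "eventually (\<lambda>n. \<forall>U\<in>F. h n \<notin> U) sequentially"
    using F(1) by (simp add: eventually_ball_finite)
  then obtain n where "\<forall>U\<in>F. h n \<notin> U" by (auto simp: eventually_sequentially)
  thus False using F(3) assms(2)[of n] by blast
qed

lemma cluster_lim:
  assumes "\<forall>V. openin W V \<and> x \<in> V \<longrightarrow> frequently (\<lambda>n. h n \<in> V) sequentially"
    and "continuous_map W euclidean (\<phi>::_ \<Rightarrow> complex)" "x \<in> topspace W"
    and "(\<lambda>n. \<phi> (h n)) \<longlonglongrightarrow> l"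
    and "\<And>n. h n \<in> topspace W"
  shows "\<phi> x = l"
proof (rule ccontr)
  assume ne: "\<phi> x \<noteq> l"
  define d where "d = dist (\<phi> x) l / 2"
  have d: "d > 0" using ne by (simp add: d_def)
  have "openin W {y \<in> topspace W. \<phi> y \<in> ball (\<phi> x) d}"
    using assms(2) unfolding continuous_map by auto
  hence "frequently (\<lambda>n. h n \<in> {y \<in> topspace W. \<phi> y \<in> ball (\<phi> x) d}) sequentially"
    using assms(1,3) d by auto
  moreover have "eventually (\<lambda>n. dist (\<phi> (h n)) l < d) sequentially"
    using assms(4) d by (simp add: tendsto_iff)
  ultimately have "frequently (\<lambda>n. h n \<in> {y \<in> topspace W. \<phi> y \<in> ball (\<phi> x) d} \<and> dist (\<phi> (h n)) l < d) sequentially"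
    by (rule frequently_eventually_frequently)
  then obtain n where "\<phi> (h n) \<in> ball (\<phi> x) d" "dist (\<phi> (h n)) l < d"
    using frequently_ex by blast
  hence "dist (\<phi> x) l < 2 * d" by (smt (verit) dist_triangle mem_ball)
  thus False by (simp add: d_def)
qed

lemma ex_ultra_seq:
  "\<exists>U::nat filter. U \<noteq> bot \<and> U \<le> sequentially \<and> (\<forall>P. eventually P U \<or> eventually (\<lambda>x. \<not> P x) U)"
proof -
  define R where "R = {(a::nat filter, b). b \<noteq> bot \<and> b \<le> a \<and> a \<le> sequentially}"
  have FR: "Field R = {G. G \<noteq> bot \<and> G \<le> sequentially}"
    unfolding R_def Field_def by (auto simp: bot_unique)
  have "\<exists>m\<in>Field R. \<forall>a\<in>Field R. (m, a) \<in> R \<longrightarrow> a = m"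
  proof (rule Zorns_po_lemma)
    show "Partial_order R"
      by (auto simp: R_def partial_order_on_def preorder_on_def
          antisym_def refl_on_def trans_def Field_def bot_unique)
    show "\<exists>u\<in>Field R. \<forall>a\<in>C. (a, u) \<in> R" if C: "C \<in> Chains R" for C
    proof (cases "C = {}")
      case True thus ?thesis unfolding FR by (intro bexI[of _ sequentially]) auto
    next
      case False
      have ch: "\<forall>a\<in>C. \<forall>b\<in>C. a \<le> b \<or> b \<le> a" and sub: "\<forall>a\<in>C. a \<noteq> bot \<and> a \<le> sequentially"
        using C False unfolding Chains_def R_def by auto
      have "Inf C \<noteq> bot"
      proof
        assume "Inf C = bot"
        hence "eventually (\<lambda>_. False) (Inf C)" by simp
        hence "\<exists>b\<in>C. eventually (\<lambda>_. False) b"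
          by (subst (asm) eventually_Inf_base) (use ch False in auto)
        thus False using sub by (auto simp: eventually_False)
      qed
      moreover obtain c where "c \<in> C" using False by auto
      hence "Inf C \<le> sequentially" using sub by (meson Inf_lower order_trans)
      ultimately show ?thesis unfolding FR using sub
        by (intro bexI[of _ "Inf C"]) (auto simp: R_def Inf_lower)
    qed
  qed
  then obtain U where U: "U \<noteq> bot" "U \<le> sequentially"
     and max: "\<And>G. G \<noteq> bot \<Longrightarrow> G \<le> U \<Longrightarrow> G = U"
    unfolding FR by (auto simp: R_def)
  have "eventually P U \<or> eventually (\<lambda>x. \<not> P x) U" for P
  proof (rule disjCI)
    assume "\<not> eventually (\<lambda>x. \<not> P x) U"
    hence "inf U (principal {x. P x}) \<noteq> bot"
      by (simp add: trivial_limit_def eventually_inf_principal)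
    hence eq: "inf U (principal {x. P x}) = U" by (rule max) simp
    have "eventually P (inf U (principal {x. P x}))" by (simp add: eventually_inf_principal)
    thus "eventually P U" by (simp only: eq)
  qed
  thus ?thesis using U by blast
qed

lemma ultra_lim:
  fixes f :: "nat \<Rightarrow> complex"
  assumes U: "U \<noteq> bot" "\<forall>P. eventually P U \<or> eventually (\<lambda>x. \<not> P x) U"
    and B: "\<And>n. norm (f n) \<le> B"
  shows "(f \<longlongrightarrow> Lim U f) U"
proof -
  have "compact (cball (0::complex) B)" by simp
  moreover have "filtermap f U \<noteq> bot" using U by (simp add: filtermap_bot_iff)
  moreover have "eventually (\<lambda>x. x \<in> cball 0 B) (filtermap f U)"
    using B by (simp add: eventually_filtermap)
  ultimately obtain x where x: "inf (nhds x) (filtermap f U) \<noteq> bot"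
    unfolding compact_filter by blast
  have "(f \<longlongrightarrow> x) U"
  proof (rule topological_tendstoI)
    fix S assume S: "open S" "x \<in> S"
    show "eventually (\<lambda>n. f n \<in> S) U"
    proof (rule ccontr)
      assume "\<not> eventually (\<lambda>n. f n \<in> S) U"
      hence "eventually (\<lambda>n. f n \<notin> S) U" using U(2) by blast
      hence "eventually (\<lambda>y. y \<notin> S) (filtermap f U)" by (simp add: eventually_filtermap)
      moreover have "eventually (\<lambda>y. y \<in> S) (nhds x)" using S by (rule eventually_nhds_in_open)
      ultimately have "eventually (\<lambda>_. False) (inf (nhds x) (filtermap f U))"
        unfolding eventually_inf by blast
      thus False using x by (simp add: trivial_limit_def)
    qed
  qed
  thus ?thesis using U(1) by (simp add: tendsto_Lim)
qed

lemma tw_pos: "typical_weight v \<Longrightarrow> z \<in> ball 0 1 \<Longrightarrow> 0 < v z"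
  unfolding typical_weight_def by blast

lemma Hv_le: "g \<in> Hv v \<Longrightarrow> z \<in> ball 0 1 \<Longrightarrow> v z * norm (g z) \<le> Hv_norm v g"
  unfolding Hv_def Hv_norm_def by (auto intro: cSUP_upper)

lemma Hv_norm_nonneg: "typical_weight v \<Longrightarrow> g \<in> Hv v \<Longrightarrow> 0 \<le> Hv_norm v g"
  using Hv_le[of g v 0] tw_pos[of v 0] by (smt (verit) centre_in_ball mult_nonneg_nonneg norm_ge_zero zero_less_one)

lemma Hv_norm_gt: "g \<in> Hv v \<Longrightarrow> a < Hv_norm v g \<Longrightarrow> \<exists>z\<in>ball 0 1. a < v z * norm (g z)"
  unfolding Hv_def Hv_norm_def by (simp add: less_cSUP_iff)

lemma eval_dual:
  assumes "typical_weight v" "z \<in> ball 0 1"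
  shows "(\<lambda>g. a * g z) \<in> Hv_dual v"
proof -
  have vz: "v z > 0" using assms tw_pos by blast
  have "norm (a * g z) \<le> norm a / v z * Hv_norm v g" if g: "g \<in> Hv v" for g
  proof -
    have "norm (a * g z) = norm a / v z * (v z * norm (g z))" using vz by (simp add: norm_mult)
    also have "\<dots> \<le> norm a / v z * Hv_norm v g"
      using Hv_le[OF g assms(2)] vz by (intro mult_left_mono) auto
    finally show ?thesis .
  qed
  thus ?thesis unfolding Hv_dual_def
    by (intro CollectI conjI exI[of _ "norm a / v z"]) (auto simp: algebra_simps)
qed

lemma uclim_point: "uc_conv fs f \<Longrightarrow> z \<in> ball 0 1 \<Longrightarrow> (\<lambda>n. fs n z) \<longlonglongrightarrow> f z"
proof -
  assume "uc_conv fs f" "z \<in> ball 0 1"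
  moreover have "compact {z} \<and> {z} \<subseteq> ball 0 1" using \<open>z \<in> ball 0 1\<close> by auto
  ultimately have "uniform_limit {z} fs f sequentially" unfolding uc_conv_def by blast
  thus ?thesis by (rule tendsto_uniform_limitI) simp
qed

lemma uc_interleave:
  assumes "uc_conv fs f"
  shows "uc_conv (\<lambda>n. if even n then fs (n div 2) else f) f"
  unfolding uc_conv_def
proof (intro allI impI)
  fix K :: "complex set" assume K: "compact K \<and> K \<subseteq> ball 0 1"
  hence u: "uniform_limit K fs f sequentially" using assms by (simp add: uc_conv_def)
  show "uniform_limit K (\<lambda>n. if even n then fs (n div 2) else f) f sequentially"
    unfolding uniform_limit_iff
  proof (intro allI impI)
    fix e :: real assume e: "e > 0"
    then obtain M where M: "\<And>n x. n \<ge> M \<Longrightarrow> x \<in> K \<Longrightarrow> dist (fs n x) (f x) < e"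
      using u unfolding uniform_limit_iff eventually_sequentially by meson
    show "\<forall>\<^sub>F n in sequentially. \<forall>x\<in>K. dist ((if even n then fs (n div 2) else f) x) (f x) < e"
      unfolding eventually_sequentially
    proof (intro exI[of _ "2*M"] allI impI ballI)
      fix n x assume "2*M \<le> n" "x \<in> K"
      thus "dist ((if even n then fs (n div 2) else f) x) (f x) < e"
        using M[of "n div 2" x] e by auto
    qed
  qed
qed

lemma intrinsic_point:
  assumes T: "intrinsic T" and f: "f \<in> Hol" and fs: "\<And>n. fs n \<in> Hol" and c: "uc_conv fs f"
    and z: "z \<in> ball 0 1"
  shows "(\<lambda>n. T (fs n) z) \<longlonglongrightarrow> T f z"
proof -
  define gs where "gs = (\<lambda>n. if even n then fs (n div 2) else f)"
  have "\<forall>n. gs n \<in> Hol" using f fs by (simp add: gs_def)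
  moreover have "uc_conv gs f" unfolding gs_def by (rule uc_interleave[OF c])
  ultimately obtain g where "uc_conv (\<lambda>n. T (gs n)) g"
    using T f unfolding intrinsic_def by blast
  hence L: "(\<lambda>n. T (gs n) z) \<longlonglongrightarrow> g z" using z by (rule uclim_point)
  have "(\<lambda>n. T (gs (2*n+1)) z) \<longlonglongrightarrow> g z"
    using LIMSEQ_subseq_LIMSEQ[OF L, of "\<lambda>n. 2*n+1"] by (simp add: strict_mono_def o_def)
  hence "(\<lambda>n. T f z) \<longlonglongrightarrow> g z" by (simp add: gs_def)
  hence gz: "g z = T f z" using LIMSEQ_unique tendsto_const by blast
  have "(\<lambda>n. T (gs (2*n)) z) \<longlonglongrightarrow> g z"
    using LIMSEQ_subseq_LIMSEQ[OF L, of "\<lambda>n. 2*n"] by (simp add: strict_mono_def o_def)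
  thus ?thesis by (simp add: gs_def gz)
qed

definition rr :: "nat \<Rightarrow> real" where "rr n = 1 - 1 / (real n + 2)"

lemma rr_bounds: "0 \<le> rr n" "rr n < 1"
  unfolding rr_def by (auto simp: field_simps)

lemma dilate_uc:
  assumes f: "f \<in> Hol"
  shows "uc_conv (\<lambda>n. dilate (rr n) f) f"
  unfolding uc_conv_def
proof (intro allI impI)
  fix K :: "complex set" assume K: "compact K \<and> K \<subseteq> ball 0 1"
  obtain \<rho> where \<rho>: "\<rho> < 1" "0 \<le> \<rho>" "\<And>z. z \<in> K \<Longrightarrow> norm z \<le> \<rho>"
  proof (cases "K = {}")
    case True thus ?thesis using that[of 0] by auto
  next
    case False
    obtain z0 where "z0 \<in> K" "\<forall>z\<in>K. norm z \<le> norm z0"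
      using compact_attains_sup[of "norm ` K"] K False
      by (metis (no_types, lifting) compact_continuous_image continuous_on_norm_id empty_is_image imageE image_eqI)
    thus ?thesis using that[of "norm z0"] K by auto
  qed
  have "continuous_on (cball 0 \<rho>) f"
  proof -
    have "continuous_on (ball 0 1) f" using f unfolding Hol_def by (simp add: holomorphic_on_imp_continuous_on)
    moreover have "cball (0::complex) \<rho> \<subseteq> ball 0 1" using \<rho>(1) by (simp add: cball_subset_ball_iff)
    ultimately show ?thesis by (rule continuous_on_subset)
  qed
  hence uc: "uniformly_continuous_on (cball 0 \<rho>) f"
    by (simp add: compact_uniformly_continuous)
  show "uniform_limit K (\<lambda>n. dilate (rr n) f) f sequentially"
    unfolding uniform_limit_iff
  proof (intro allI impI)
    fix e :: real assume e: "e > 0"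
    then obtain d where d: "d > 0" "\<And>x y. x \<in> cball 0 \<rho> \<Longrightarrow> y \<in> cball 0 \<rho> \<Longrightarrow> dist y x < d \<Longrightarrow> dist (f y) (f x) < e"
      using uc unfolding uniformly_continuous_on_def by metis
    obtain M :: nat where M: "1 / d < M" using reals_Archimedean2 by blast
    show "\<forall>\<^sub>F n in sequentially. \<forall>x\<in>K. dist (dilate (rr n) f x) (f x) < e"
      unfolding eventually_sequentially
    proof (intro exI[of _ M] allI impI ballI)
      fix n x assume n: "M \<le> n" and x: "x \<in> K"
      have xb: "x \<in> ball 0 1" using x K by auto
      have r: "0 \<le> rr n" "rr n < 1" using rr_bounds by auto
      have "1 / (real n + 2) < d"
      proof -
        have "1 / d < real n + 2" using M n by linarith
        thus ?thesis using d(1) by (simp add: field_simps)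
      qed
      hence "1 - rr n < d" by (simp add: rr_def)
      have "of_real (rr n) * x - x = - (of_real (1 - rr n) * x)" by (simp add: algebra_simps)
      hence "dist (of_real (rr n) * x) x = (1 - rr n) * norm x"
        using r by (simp only: dist_norm norm_minus_cancel norm_mult norm_of_real)
        also have "\<dots> \<le> 1 - rr n" using xb r by (simp add: mult_left_le)
      finally have "dist (of_real (rr n) * x) x < d" using \<open>1 - rr n < d\<close> by linarith
      moreover have "of_real (rr n) * x \<in> cball 0 \<rho>" "x \<in> cball 0 \<rho>"
        using \<rho>(3)[OF x] r by (auto simp: norm_mult mult_le_one intro: order_trans[OF mult_left_le_one_le])
      ultimately have "dist (f (of_real (rr n) * x)) (f x) < e" using d(2) by blast
      thus "dist (dilate (rr n) f x) (f x) < e" using xb by (simp add: dilate_def)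
    qed
  qed
qed

lemma dual_bdd:
  assumes "compactin (Hv_weak v) K" "\<phi> \<in> Hv_dual v"
  shows "\<exists>R. \<forall>s\<in>K. norm (\<phi> s) \<le> R"
proof -
  have "compactin euclidean (\<phi> ` K)"
    using image_compactin[OF assms(1) Hv_dual_cont[OF assms(2)]] .
  hence "bounded (\<phi> ` K)" by (simp add: compact_imp_bounded)
  thus ?thesis unfolding bounded_iff by blast
qed

lemma gliding:
  assumes tw: "typical_weight v" and SH: "S \<subseteq> Hv v" and K: "compactin (Hv_weak v) K" and SK: "S \<subseteq> K"
  shows "\<exists>B. \<forall>s\<in>S. Hv_norm v s \<le> B"
proof (rule ccontr)
  assume "\<not> ?thesis"
  hence unb: "\<And>B. \<exists>s\<in>S. B < Hv_norm v s" by (meson not_le)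
  define nrm where "nrm = Hv_norm v"
  have nrm0: "\<And>s. s \<in> S \<Longrightarrow> 0 \<le> nrm s" using SH tw Hv_norm_nonneg unfolding nrm_def by blast
  have "\<forall>w\<in>ball 0 1. \<exists>B. \<forall>s\<in>S. v w * norm (s w) \<le> B"
  proof
    fix w :: complex assume w: "w \<in> ball 0 1"
    obtain R where R: "\<forall>s\<in>K. norm (of_real (v w) * s w) \<le> R"
      using dual_bdd[OF K eval_dual[OF tw w]] by blast
    have "v w > 0" using tw w tw_pos by blast
    thus "\<exists>B. \<forall>s\<in>S. v w * norm (s w) \<le> B" using R SK
      by (intro exI[of _ R]) (auto simp: norm_mult)
  qed
  then obtain Bd where Bd: "\<And>w s. w \<in> ball 0 1 \<Longrightarrow> s \<in> S \<Longrightarrow> v w * norm (s w) \<le> Bd w"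
    by metis
  have "\<exists>p. fst p \<in> S \<and> snd p \<in> ball 0 1 \<and> 2 * (real k + A + 3) * (1 + M) * 2 ^ k < nrm (fst p)
      \<and> nrm (fst p) / 2 < v (snd p) * norm (fst p (snd p))" for k :: nat and A M :: real
  proof -
    obtain s where s: "s \<in> S" "max 0 (2 * (real k + A + 3) * (1 + M) * 2 ^ k) < nrm s"
      using unb unfolding nrm_def by blast
    hence "nrm s / 2 < Hv_norm v s" by (simp add: nrm_def)
    then obtain w where "w \<in> ball 0 1" "nrm s / 2 < v w * norm (s w)"
      using Hv_norm_gt[of s v] s SH by blast
    thus ?thesis using s by (intro exI[of _ "(s, w)"]) auto
  qed
  then obtain P where P: "\<And>k A M. fst (P k A M) \<in> S \<and> snd (P k A M) \<in> ball 0 1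
      \<and> 2 * (real k + A + 3) * (1 + M) * 2 ^ k < nrm (fst (P k A M))
      \<and> nrm (fst (P k A M)) / 2 < v (snd (P k A M)) * norm (fst (P k A M) (snd (P k A M)))"
    by metis
  define stp where "stp = (\<lambda>(k::nat) (p::real\<times>real). (fst p + (1/2)^k / (1 + snd p) * Bd (snd (P k (fst p) (snd p))),
      snd p + nrm (fst (P k (fst p) (snd p)))))"
  define st where "st = rec_nat (0, 0) stp"
  define Am where "Am k = fst (st k)" for k
  define Mm where "Mm k = snd (st k)" for k
  define s where "s k = fst (P k (Am k) (Mm k))" for k
  define w where "w k = snd (P k (Am k) (Mm k))" for k
  define c where "c k = (1/2::real)^k / (1 + Mm k)" for k
  have st0: "Am 0 = 0" "Mm 0 = 0" by (simp_all add: Am_def Mm_def st_def)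
  have stS: "Am (Suc k) = Am k + c k * Bd (w k)" "Mm (Suc k) = Mm k + nrm (s k)" for k
    by (simp_all add: Am_def Mm_def st_def stp_def c_def s_def w_def)
  have sS: "s k \<in> S" and wB: "w k \<in> ball 0 1"
    and big: "2 * (real k + Am k + 3) * (1 + Mm k) * 2 ^ k < nrm (s k)"
    and peak: "nrm (s k) / 2 < v (w k) * norm (s k (w k))" for k
    using P[of k "Am k" "Mm k"] unfolding s_def w_def by auto
  have Mm0: "0 \<le> Mm k" for k
    by (induction k) (auto simp: st0 stS intro!: add_nonneg_nonneg nrm0 sS)
  have Mmono: "Mm k \<le> Mm (k + d)" for k d
    by (induction d) (auto simp: stS intro: order_trans[OF _ le_add_same_cancel1[THEN iffD2, OF nrm0[OF sS]]])
  have sM: "nrm (s k) \<le> Mm j" if "k < j" for k j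
  proof -
    have "nrm (s k) \<le> Mm (Suc k)" using Mm0[of k] by (simp add: stS)
    also have "\<dots> \<le> Mm j" using Mmono[of "Suc k" "j - Suc k"] that by simp
    finally show ?thesis .
  qed
  have Asum: "Am k = (\<Sum>j<k. c j * Bd (w j))" for k
    by (induction k) (simp_all add: st0 stS)
  have c0: "0 < c k" for k using Mm0[of k] by (simp add: c_def)
  have cle: "c k \<le> (1/2)^k" for k
  proof -
    have "(1/2::real)^k / (1 + Mm k) \<le> (1/2)^k / 1" using Mm0[of k] by (intro divide_left_mono) auto
    thus ?thesis by (simp add: c_def)
  qed
  have vpos: "\<And>z. z \<in> ball 0 1 \<Longrightarrow> 0 < v z" using tw tw_pos by blast
  define \<phi> where "\<phi> g = (\<Sum>j. of_real (c j) * (of_real (v (w j)) * g (w j)))" for g :: "complex \<Rightarrow> complex"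
  have tb: "norm (of_real (c j) * (of_real (v (w j)) * g (w j))) \<le> (1/2)^j * Hv_norm v g"
    if g: "g \<in> Hv v" for g j
  proof -
    have "norm (of_real (c j) * (of_real (v (w j)) * g (w j))) = c j * (v (w j) * norm (g (w j)))"
      using c0[of j] vpos[OF wB[of j]] by (simp add: norm_mult)
    also have "\<dots> \<le> c j * Hv_norm v g" using Hv_le[OF g wB[of j]] c0[of j] by (intro mult_left_mono) auto
    also have "\<dots> \<le> (1/2)^j * Hv_norm v g"
      using cle[of j] Hv_norm_nonneg[OF tw g] by (intro mult_right_mono) auto
    finally show ?thesis .
  qed
  have summn: "summable (\<lambda>j. norm (of_real (c j) * (of_real (v (w j)) * g (w j))))" if g: "g \<in> Hv v" for g
  proof (rule summable_comparison_test)
    show "\<exists>N. \<forall>n\<ge>N. norm (norm (of_real (c n) * (of_real (v (w n)) * g (w n)))) \<le> (1/2)^n * Hv_norm v g"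
      using tb[OF g] by auto
    show "summable (\<lambda>n. (1/2::real)^n * Hv_norm v g)" by (intro summable_mult2 summable_geometric) simp
  qed
  have summ: "summable (\<lambda>j. of_real (c j) * (of_real (v (w j)) * g (w j)))" if g: "g \<in> Hv v" for g
    using summn[OF g] by (rule summable_norm_cancel)
  have lin: "\<phi> (\<lambda>z. a * f z + b * g z) = a * \<phi> f + b * \<phi> g" if f: "f \<in> Hv v" and g: "g \<in> Hv v" for f g a b
  proof -
    have "\<phi> (\<lambda>z. a * f z + b * g z) = (\<Sum>j. a * (of_real (c j) * (of_real (v (w j)) * f (w j)))
          + b * (of_real (c j) * (of_real (v (w j)) * g (w j))))"
      unfolding \<phi>_def by (simp add: algebra_simps)
    also have "\<dots> = (\<Sum>j. a * (of_real (c j) * (of_real (v (w j)) * f (w j))))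
          + (\<Sum>j. b * (of_real (c j) * (of_real (v (w j)) * g (w j))))"
      by (rule suminf_add[symmetric]) (auto intro: summable_mult summ f g)
    also have "\<dots> = a * \<phi> f + b * \<phi> g"
      unfolding \<phi>_def by (simp add: suminf_mult summ f g)
    finally show ?thesis .
  qed
  have bnd: "norm (\<phi> g) \<le> 2 * Hv_norm v g" if g: "g \<in> Hv v" for g
  proof -
    have "norm (\<phi> g) \<le> (\<Sum>j. norm (of_real (c j) * (of_real (v (w j)) * g (w j))))"
      unfolding \<phi>_def by (rule summable_norm[OF summn[OF g]])
    also have "\<dots> \<le> (\<Sum>j. (1/2::real)^j * Hv_norm v g)"
      by (rule suminf_le[OF tb[OF g] summn[OF g]]) (intro summable_mult2 summable_geometric, simp)
    also have "\<dots> = 2 * Hv_norm v g" by (simp add: suminf_mult2[symmetric] suminf_geometric)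
    finally show ?thesis .
  qed
  have "\<phi> \<in> Hv_dual v" unfolding Hv_dual_def using lin bnd by blast
  then obtain R where R: "\<forall>g\<in>K. norm (\<phi> g) \<le> R" using dual_bdd[OF K] by blast
  obtain k :: nat where k: "R < real k" using reals_Archimedean2 by blast
  have sk: "s k \<in> Hv v" using sS SH by blast
  define t where "t j = of_real (c j) * (of_real (v (w j)) * s k (w j))" for j
  define u where "u j = (if j = k then 0 else t j)" for j
  define e where "e j = (if j < k then c j * Bd (w j) else 0)" for j
  have ub: "norm (u j) \<le> e j + (1/2)^j" for j
  proof (cases "j < k")
    case True
    have "norm (t j) = c j * (v (w j) * norm (s k (w j)))"
      using c0[of j] vpos[OF wB[of j]] by (simp add: t_def norm_mult)
    also have "\<dots> \<le> c j * Bd (w j)" using Bd[OF wB sS] c0[of j] by (intro mult_left_mono) auto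
    finally have "norm (t j) \<le> c j * Bd (w j)" .
    moreover have "0 \<le> (1/2::real)^j" by simp
    moreover have "norm (u j) = norm (t j)" "e j = c j * Bd (w j)" using True by (auto simp: u_def e_def)
    ultimately show ?thesis by linarith
  next
    case False
    show ?thesis
    proof (cases "j = k")
      case True thus ?thesis by (simp add: u_def e_def)
    next
      case jk: False
      hence kj: "k < j" using False by simp
      have "norm (t j) = c j * (v (w j) * norm (s k (w j)))"
        using c0[of j] vpos[OF wB[of j]] by (simp add: t_def norm_mult)
      also have "\<dots> \<le> c j * nrm (s k)" using Hv_le[OF sk wB[of j]] c0[of j]
        by (intro mult_left_mono) (auto simp: nrm_def)
      also have "\<dots> = (1/2)^j * (nrm (s k) / (1 + Mm j))" by (simp add: c_def)
      also have "\<dots> \<le> (1/2)^j * 1"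
      proof (rule mult_left_mono)
        have "nrm (s k) \<le> 1 + Mm j" using sM[OF kj] by linarith
        thus "nrm (s k) / (1 + Mm j) \<le> 1" using Mm0[of j] by (simp add: divide_le_eq_1_pos)
      qed simp
      finally have "norm (t j) \<le> (1/2)^j" by simp
      thus ?thesis using False jk unfolding u_def e_def by simp
    qed
  qed
  have esum: "e sums (\<Sum>j<k. e j)" by (rule sums_finite) (auto simp: e_def)
  have "(\<Sum>j<k. e j) = Am k" unfolding Asum e_def by (rule sum.cong) auto
  hence sume: "summable e" "suminf e = Am k" using esum by (auto simp: sums_iff)
  have sumb: "summable (\<lambda>j. e j + (1/2::real)^j)"
    by (rule summable_add[OF sume(1)]) (rule summable_geometric, simp)
  have sumu: "summable (\<lambda>j. norm (u j))"
  proof (rule summable_comparison_test[OF _ sumb])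
    show "\<exists>N. \<forall>n\<ge>N. norm (norm (u n)) \<le> e n + (1/2)^n" using ub by simp
  qed
  have nu: "norm (suminf u) \<le> Am k + 2"
  proof -
    have "norm (suminf u) \<le> (\<Sum>j. norm (u j))" by (rule summable_norm[OF sumu])
    also have "\<dots> \<le> (\<Sum>j. e j + (1/2)^j)"
      by (rule suminf_le[OF ub sumu sumb])
    also have "\<dots> = Am k + 2"
      using suminf_add[OF sume(1) summable_geometric[of "1/2::real"]] sume suminf_geometric[of "1/2::real"] by simp
    finally show ?thesis .
  qed
  have tsum: "t sums \<phi> (s k)" unfolding t_def \<phi>_def using summ[OF sk] by (simp add: summable_sums)
  have "(\<lambda>j. if j = k then t k else 0) sums t k" by (rule sums_single)
  hence "(\<lambda>n. t n - (if n = k then t k else 0)) sums (\<phi> (s k) - t k)" by (rule sums_diff[OF tsum])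
  moreover have "(\<lambda>n. t n - (if n = k then t k else 0)) = u" by (auto simp: u_def fun_eq_iff)
  ultimately have "u sums (\<phi> (s k) - t k)" by simp
  hence phi_eq: "\<phi> (s k) = t k + suminf u" by (simp add: sums_iff)
  have "norm (t k) = c k * (v (w k) * norm (s k (w k)))"
    using c0[of k] vpos[OF wB[of k]] by (simp add: t_def norm_mult)
  also have "\<dots> > c k * (nrm (s k) / 2)" using peak[of k] c0[of k] by simp
  finally have "c k * (nrm (s k) / 2) < norm (t k)" .
  moreover have "real k + Am k + 3 < c k * (nrm (s k) / 2)"
  proof -
    have pos: "0 < (1 + Mm k) * 2 ^ k" using Mm0[of k] by simp
    have "c k * (nrm (s k) / 2) = nrm (s k) / (2 * ((1 + Mm k) * 2 ^ k))"
      by (simp add: c_def power_divide field_simps)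
    moreover have "real k + Am k + 3 < nrm (s k) / (2 * ((1 + Mm k) * 2 ^ k))"
      using big[of k] pos by (subst pos_less_divide_eq) (simp_all add: algebra_simps)
    ultimately show ?thesis by (simp only:)
  qed
  ultimately have "real k + Am k + 3 < norm (t k)" by linarith
  hence "real k + 1 < norm (\<phi> (s k))"
    using nu phi_eq norm_triangle_ineq2[of "t k" "- suminf u"] by simp
  moreover have "norm (\<phi> (s k)) \<le> R" using R SK sS by blast
  ultimately show False using k by linarith
qed

lemma Tscale: "lin_op_Hol T \<Longrightarrow> f \<in> Hol \<Longrightarrow> T (\<lambda>z. a * f z) = (\<lambda>z. a * T f z)"
  unfolding lin_op_Hol_def by (drule conjunct2, erule_tac x=f in ballE, erule_tac x=f in ballE,
      erule_tac x=a in allE, erule_tac x=0 in allE) auto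

lemma Xscale:
  assumes "banach_subspace X N" "f \<in> X"
  shows "(\<lambda>z. a * f z) \<in> X" "N (\<lambda>z. a * f z) = norm a * N f"
proof -
  have "(\<lambda>z. a * f z + 0 * f z) \<in> X" using assms unfolding banach_subspace_def by blast
  thus "(\<lambda>z. a * f z) \<in> X" by simp
  show "N (\<lambda>z. a * f z) = norm a * N f" using assms unfolding banach_subspace_def by blast
qed

theorem theorem3p3:
  fixes v :: "complex \<Rightarrow> real"
    and X :: "(complex \<Rightarrow> complex) set"
    and N :: "(complex \<Rightarrow> complex) \<Rightarrow> real"
    and T :: "(complex \<Rightarrow> complex) \<Rightarrow> (complex \<Rightarrow> complex)"
    and C :: real
  assumes "typical_weight v"
    and "initial_space X N"
    and "\<forall>f\<in>X. \<forall>r. 0 \<le> r \<and> r < 1 \<longrightarrow> dilate r f \<in> X \<and> N (dilate r f) \<le> C * N f"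
    and "intrinsic T"
    and "\<forall>f\<in>X. \<forall>r. 0 \<le> r \<and> r < 1 \<longrightarrow> T (dilate r f) \<in> Hv0 v"
    and "weakly_compact_into_Hv T X N v"
  shows "(\<forall>f\<in>X. T f \<in> Hv0 v) \<and> (\<exists>M. \<forall>f\<in>X. Hv_norm v (T f) \<le> M * N f)"
proof -
  note tw = assms(1)
  have bs: "banach_subspace X N" using assms(2) by (simp add: initial_space_def)
  have XH: "X \<subseteq> Hol" using bs by (simp add: banach_subspace_def)
  have N0: "\<And>f. f \<in> X \<Longrightarrow> 0 \<le> N f" using bs by (simp add: banach_subspace_def)
  have lin: "lin_op_Hol T" using assms(4) by (simp add: intrinsic_def)
  have THol: "\<And>f. f \<in> Hol \<Longrightarrow> T f \<in> Hol" using lin by (simp add: lin_op_Hol_def)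
  have TX: "T ` X \<subseteq> Hv v" using assms(6) by (simp add: weakly_compact_into_Hv_def)
  define W where "W = Hv_weak v"
  define S where "S = T ` {f\<in>X. N f \<le> 1}"
  define K where "K = W closure_of S"
  have Kc: "compactin W K" using assms(6) by (simp add: weakly_compact_into_Hv_def W_def K_def S_def)
  have SH: "S \<subseteq> Hv v" using TX by (auto simp: S_def)
  have SK: "S \<subseteq> K" unfolding K_def by (rule closure_of_subset) (simp add: W_def Hv_weak_topspace SH)
  have KH: "K \<subseteq> Hv v" unfolding K_def using closure_of_subset_topspace[of W S] by (simp add: W_def Hv_weak_topspace)
  have HvHol: "Hv v \<subseteq> Hol" by (auto simp: Hv_def)
  define C' where "C' = max C 1"
  have partA: "T f \<in> Hv0 v" if f: "f \<in> X" and fN: "C' * N f \<le> 1" for f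
  proof (rule ccontr)
    assume notin: "T f \<notin> Hv0 v"
    define h where "h n = T (dilate (rr n) f)" for n
    have dX: "dilate (rr n) f \<in> X" "N (dilate (rr n) f) \<le> C * N f" for n
      using assms(3) f rr_bounds by blast+
    have "C * N f \<le> C' * N f" using N0[OF f] by (intro mult_right_mono) (auto simp: C'_def)
    hence hS: "h n \<in> S" for n using dX[of n] fN unfolding S_def h_def by force
    obtain x where x: "x \<in> K" and xc: "\<forall>V. openin W V \<and> x \<in> V \<longrightarrow> frequently (\<lambda>n. h n \<in> V) sequentially"
      using compact_cluster[OF Kc, of h] hS SK by blast
    have xtop: "x \<in> topspace W" and htop: "\<And>n. h n \<in> topspace W"
      using x KH hS SH by (auto simp: W_def Hv_weak_topspace)
    have fH: "f \<in> Hol" using f XH by blast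
    have "x z = T f z" for z
    proof (cases "z \<in> ball 0 1")
      case True
      have "(\<lambda>n. h n z) \<longlonglongrightarrow> T f z" unfolding h_def
        by (rule intrinsic_point[OF assms(4) fH _ dilate_uc[OF fH] True]) (use dX XH in blast)
      hence "(\<lambda>n. (\<lambda>g. 1 * g z) (h n)) \<longlonglongrightarrow> T f z" by simp
      moreover have "continuous_map W euclidean (\<lambda>g. 1 * g z)"
        using Hv_dual_cont[OF eval_dual[OF tw True]] by (simp only: W_def)
      ultimately show ?thesis using cluster_lim[OF xc _ xtop _ htop] by simp
    next
      case False
      have "x \<in> Hol" "T f \<in> Hol" using x KH HvHol THol fH by blast+
      thus ?thesis using False by (simp add: Hol_def)
    qed
    hence xTf: "x = T f" by blast
    have TfH: "T f \<in> Hv v" using x KH xTf by blast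
    have "T f \<in> Hol" using THol fH by blast
    with notin obtain e where e: "e > 0" and ebig: "\<And>d. d < 1 \<Longrightarrow> \<exists>z\<in>ball 0 1. d < norm z \<and> e \<le> v z * norm (T f z)"
      unfolding Hv0_def by (auto simp: not_less) (meson not_le)
    have "\<exists>z\<in>ball 0 1. 1 - 1 / (real k + 1) < norm z \<and> e \<le> v z * norm (T f z)" for k :: nat
      by (rule ebig) simp
    then obtain zz where zz: "\<And>k. zz k \<in> ball 0 1" "\<And>k. 1 - 1 / (real k + 1) < norm (zz k)"
      "\<And>k. e \<le> v (zz k) * norm (T f (zz k))" by metis
    have vzz: "0 < v (zz k)" for k using tw zz(1) tw_pos by blast
    have Tz0: "T f (zz k) \<noteq> 0" for k using zz(3)[of k] e by auto
    define a where "a k = of_real (v (zz k)) * cnj (T f (zz k)) / of_real (norm (T f (zz k)))" for k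
    have na: "norm (a k) = v (zz k)" for k using vzz[of k] Tz0[of k] by (simp add: a_def norm_mult norm_divide)
    define \<psi> where "\<psi> k g = a k * g (zz k)" for k g
    obtain U :: "nat filter" where U: "U \<noteq> bot" "U \<le> sequentially" "\<forall>P. eventually P U \<or> eventually (\<lambda>x. \<not> P x) U"
      using ex_ultra_seq by blast
    define L where "L g = Lim U (\<lambda>k. \<psi> k g)" for g
    have \<psi>b: "norm (\<psi> k g) \<le> Hv_norm v g" if "g \<in> Hv v" for k g
      using Hv_le[OF that zz(1)[of k]] by (simp add: \<psi>_def norm_mult na)
    have Lt: "((\<lambda>k. \<psi> k g) \<longlongrightarrow> L g) U" if "g \<in> Hv v" for g
      unfolding L_def by (rule ultra_lim[OF U(1,3)]) (rule \<psi>b[OF that])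
    have "L \<in> Hv_dual v"
    proof -
      have "L (\<lambda>z. c * f1 z + d * g z) = c * L f1 + d * L g" if "f1 \<in> Hv v" "g \<in> Hv v" for f1 g c d
      proof -
        have "((\<lambda>k. c * \<psi> k f1 + d * \<psi> k g) \<longlongrightarrow> c * L f1 + d * L g) U"
          by (intro tendsto_intros Lt that)
        moreover have "(\<lambda>k. \<psi> k (\<lambda>z. c * f1 z + d * g z)) = (\<lambda>k. c * \<psi> k f1 + d * \<psi> k g)"
          by (simp add: \<psi>_def fun_eq_iff algebra_simps)
        ultimately show ?thesis unfolding L_def using U(1) by (simp add: tendsto_Lim)
      qed
      moreover have "norm (L g) \<le> 1 * Hv_norm v g" if "g \<in> Hv v" for g
        using Lim_in_closed_set[of "cball 0 (Hv_norm v g)" "\<lambda>k. \<psi> k g" U "L g"] Lt[OF that] \<psi>b[OF that] U(1)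
        by simp
      ultimately show ?thesis unfolding Hv_dual_def by blast
    qed
    note Lc = Hv_dual_cont[OF this, folded W_def]
    have Lh: "L (h n) = 0" for n
    proof -
      have hv0: "h n \<in> Hv0 v" unfolding h_def using assms(5) f rr_bounds by blast
      have "(\<lambda>k. \<psi> k (h n)) \<longlonglongrightarrow> 0"
      proof (rule LIMSEQ_I)
        fix r :: real assume r: "0 < r"
        then obtain d where d: "d < 1" "\<And>z. z \<in> ball 0 1 \<Longrightarrow> d < norm z \<Longrightarrow> v z * norm (h n z) < r"
          using hv0 unfolding Hv0_def by blast
        obtain K0 :: nat where K0: "1 / (1 - d) < K0" using reals_Archimedean2 by blast
        show "\<exists>no. \<forall>k\<ge>no. norm (\<psi> k (h n) - 0) < r"
        proof (intro exI allI impI)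
          fix k assume k: "K0 \<le> k"
          have "1 / (1 - d) < real k + 1" using K0 k by linarith
          moreover have p: "0 < 1 - d" using d(1) by simp
          ultimately have "1 < (real k + 1) * (1 - d)" by (simp add: pos_divide_less_eq)
          hence "1 / (real k + 1) < 1 - d" by (simp add: pos_divide_less_eq mult.commute)
          hence "d < norm (zz k)" using zz(2)[of k] by linarith
          hence "v (zz k) * norm (h n (zz k)) < r" using d(2) zz(1) by blast
          thus "norm (\<psi> k (h n) - 0) < r" by (simp add: \<psi>_def norm_mult na)
        qed
      qed
      hence "((\<lambda>k. \<psi> k (h n)) \<longlongrightarrow> 0) U" using U(2) by (rule tendsto_mono[rotated])
      thus ?thesis unfolding L_def using U(1) by (simp add: tendsto_Lim)
    qed
    have "(\<lambda>n. L (h n)) \<longlonglongrightarrow> 0" by (simp add: Lh)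
    from cluster_lim[OF xc Lc xtop this htop] have "L (T f) = 0" by (simp add: xTf)
    moreover have "e \<le> Re (L (T f))"
    proof -
      have "\<psi> k (T f) = of_real (v (zz k) * norm (T f (zz k)))" for k
      proof -
        have "cnj (T f (zz k)) * T f (zz k) = of_real (norm (T f (zz k)) ^ 2)"
          by (metis complex_norm_square mult.commute)
        thus ?thesis using Tz0[of k]
          by (simp add: \<psi>_def a_def field_simps power2_eq_square)
      qed
      hence "\<forall>k. \<psi> k (T f) \<in> {w. e \<le> Re w}" using zz(3) by simp
      hence "L (T f) \<in> {w. e \<le> Re w}"
        using Lim_in_closed_set[OF closed_halfspace_Re_ge _ U(1) Lt[OF TfH]] by simp
      thus ?thesis by simp
    qed
    ultimately show False using e by simp
  qed
  have A: "T f \<in> Hv0 v" if f: "f \<in> X" for f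
  proof -
    have C'1: "1 \<le> C'" by (simp add: C'_def)
    define b where "b = 1 / (C' * (N f + 1))"
    have b: "0 < b" using C'1 N0[OF f] by (simp add: b_def)
    define f' where "f' = (\<lambda>z. of_real b * f z)"
    have f'X: "f' \<in> X" and Nf': "N f' = b * N f" using Xscale[OF bs f, of "of_real b"] b by (simp_all add: f'_def)
    have "C' * N f' = N f / (N f + 1)" using C'1 N0[OF f] by (simp add: Nf' b_def)
    also have "\<dots> \<le> 1" using N0[OF f] by simp
    finally have T': "T f' \<in> Hv0 v" by (rule partA[OF f'X])
    have Tf': "T f' = (\<lambda>z. of_real b * T f z)" unfolding f'_def by (rule Tscale[OF lin]) (use f XH in blast)
    have "T f \<in> Hol" using f XH THol by blast
    moreover have "\<exists>d<1. \<forall>z\<in>ball 0 1. d < norm z \<longrightarrow> v z * norm (T f z) < r" if r: "r > 0" for r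
    proof -
      obtain d where "d < 1" "\<forall>z\<in>ball 0 1. d < norm z \<longrightarrow> v z * norm (T f' z) < r * b"
      proof -
        have "r * b > 0" using r b by simp
        thus ?thesis using T' that unfolding Hv0_def by blast
      qed
      moreover have "v z * norm (T f' z) = b * (v z * norm (T f z))" for z
        using b by (simp add: Tf' norm_mult)
      ultimately show ?thesis using b by (metis mult.commute mult_less_cancel_left_pos)
    qed
    ultimately show ?thesis unfolding Hv0_def by blast
  qed
  obtain B where B: "\<And>s. s \<in> S \<Longrightarrow> Hv_norm v s \<le> B"
    using gliding[OF tw SH Kc[unfolded W_def] SK] by blast
  have "Hv_norm v (T f) \<le> B * N f" if f: "f \<in> X" for f
  proof (cases "N f = 0")
    case True
    hence "f = (\<lambda>z. 0)" using bs f by (simp add: banach_subspace_def)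
    moreover have "(\<lambda>z. 0) \<in> Hol" by (simp add: Hol_def)
    ultimately have "T f = (\<lambda>z. 0 * T (\<lambda>z. 0) z)" using Tscale[OF lin, of "\<lambda>z. 0" 0] by simp
    thus ?thesis using True by (simp add: Hv_norm_def)
  next
    case False
    hence Np: "0 < N f" using N0[OF f] by simp
    define f' where "f' = (\<lambda>z. of_real (1 / N f) * f z)"
    have f'X: "f' \<in> X" and Nf': "N f' = 1" using Xscale[OF bs f, of "of_real (1 / N f)"] Np by (simp_all add: f'_def norm_divide)
    have "T f' \<in> S" using f'X Nf' by (auto simp: S_def)
    hence b1: "Hv_norm v (T f') \<le> B" by (rule B)
    have T'H: "T f' \<in> Hv v" using \<open>T f' \<in> S\<close> SH by blast
    have Tf': "T f' = (\<lambda>z. of_real (1 / N f) * T f z)" unfolding f'_def by (rule Tscale[OF lin]) (use f XH in blast)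
    show ?thesis unfolding Hv_norm_def
    proof (rule cSUP_least)
      fix z :: complex assume z: "z \<in> ball 0 1"
      have "v z * norm (T f z) = N f * (v z * norm (T f' z))" using Np by (simp add: Tf' norm_mult norm_divide)
      also have "\<dots> \<le> N f * B" using Hv_le[OF T'H z] b1 Np by (intro mult_left_mono) auto
      finally show "v z * norm (T f z) \<le> B * N f" by (simp add: mult.commute)
    qed simp
  qed
  thus ?thesis using A by blast
qed

end
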